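(* There is an absolute constant $C$ such that for every integer $k\ge2$, every set $S$ of $k$-sparse finite real sequences (each having at most $k$ nonzero coordinates, with arbitrary lengths and arbitrary real coordinates) has doubling dimension at most $Ck\log k$ under $d_{\mathrm{ERP}}$.
   Context: Edit Distance with Real Penalty (ERP): for finite real sequences $r,s$ (possibly of different lengths), let $m'$ be the length of the longer one. A gap insertion inserts a zero-valued coordinate at any position. For $p\ge m'$ let $R_p$ (resp. $S_p$) be the set of length-$p$ sequences obtainable from $r$ (resp. $s$) by gap insertions. Then $d_{\mathrm{ERP}}(r,s)=\min_{p\ge m',\ \tilde r\in R_p,\ \tilde s\in S_p}\|\tilde r-\tilde s\|_1$. The doubling constant $\lambda$ of a (pseudo)metric space is the smallest number such that every ball (centered in the space) can be covered by $\lambda$ balls of half the radius; the doubling dimension is $\mathrm{ddim}=\log_2\lambda$. *)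

theory Defs
  imports Complex_Main
begin

text \<open>A finite real sequence is a list of reals. A list t is obtainable from r by
gap insertions iff r is the subsequence of t at some index set I and every
coordinate of t outside I is zero.\<close>
definition gap_ext :: "real list \<Rightarrow> real list \<Rightarrow> bool" where
  "gap_ext r t \<longleftrightarrow> (\<exists>I. I \<subseteq> {0..<length t} \<and> nths t I = r \<and>
      (\<forall>i<length t. i \<notin> I \<longrightarrow> t ! i = 0))"

definition gap_exts :: "real list \<Rightarrow> nat \<Rightarrow> real list set" where
  "gap_exts r p = {t. length t = p \<and> gap_ext r t}"

definition l1_dist :: "real list \<Rightarrow> real list \<Rightarrow> real" where
  "l1_dist u v = (\<Sum>i<length u. \<bar>u ! i - v ! i\<bar>)"

definition d_ERP :: "real list \<Rightarrow> real list \<Rightarrow> real" where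
  "d_ERP r s = Inf {l1_dist r' s' | p r' s'.
      p \<ge> max (length r) (length s) \<and> r' \<in> gap_exts r p \<and> s' \<in> gap_exts s p}"

definition dball :: "('a \<Rightarrow> 'a \<Rightarrow> real) \<Rightarrow> 'a set \<Rightarrow> 'a \<Rightarrow> real \<Rightarrow> 'a set" where
  "dball d S x \<rho> = {y \<in> S. d x y \<le> \<rho>}"

definition doubling_const_le :: "('a \<Rightarrow> 'a \<Rightarrow> real) \<Rightarrow> 'a set \<Rightarrow> real \<Rightarrow> bool" where
  "doubling_const_le d S N \<longleftrightarrow> (\<forall>x\<in>S. \<forall>\<rho>>0. \<exists>T. T \<subseteq> S \<and> finite T \<and>
      real (card T) \<le> N \<and> dball d S x \<rho> \<subseteq> (\<Union>t\<in>T. dball d S t (\<rho>/2)))"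

text \<open>ddim = log2 of the doubling constant, so ddim \<le> D iff constant \<le> 2 powr D.\<close>
definition doubling_dim_le :: "('a \<Rightarrow> 'a \<Rightarrow> real) \<Rightarrow> 'a set \<Rightarrow> real \<Rightarrow> bool" where
  "doubling_dim_le d S D \<longleftrightarrow> doubling_const_le d S (2 powr D)"

definition sparse :: "nat \<Rightarrow> real list \<Rightarrow> bool" where
  "sparse k s \<longleftrightarrow> card {i. i < length s \<and> s ! i \<noteq> 0} \<le> k"

end

theory Submission
  imports Defs
begin

lemma gap_ext_Cons: "gap_ext r t \<Longrightarrow> gap_ext (a#r) (a#t)"
proof -
  assume "gap_ext r t"
  then obtain I where I: "I \<subseteq> {0..<length t}" "nths t I = r" "\<forall>i<length t. i \<notin> I \<longrightarrow> t ! i = 0"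
    unfolding gap_ext_def by blast
  define J where "J = insert 0 (Suc ` I)"
  have e: "{j. Suc j \<in> J} = I" unfolding J_def by auto
  show ?thesis unfolding gap_ext_def
  proof (intro exI conjI allI impI)
    show "J \<subseteq> {0..<length (a#t)}" using I(1) unfolding J_def by auto
    show "nths (a#t) J = a#r" using I(2) e by (simp add: nths_Cons J_def)
    fix i assume "i < length (a#t)" "i \<notin> J"
    then show "(a#t) ! i = 0" using I(3) unfolding J_def
      by (cases i) auto
  qed
qed

lemma gap_ext_zero: "gap_ext r t \<Longrightarrow> gap_ext r (0#t)"
proof -
  assume "gap_ext r t"
  then obtain I where I: "I \<subseteq> {0..<length t}" "nths t I = r" "\<forall>i<length t. i \<notin> I \<longrightarrow> t ! i = 0"
    unfolding gap_ext_def by blast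
  define J where "J = Suc ` I"
  have e: "{j. Suc j \<in> J} = I" unfolding J_def by auto
  show ?thesis unfolding gap_ext_def
  proof (intro exI conjI allI impI)
    show "J \<subseteq> {0..<length (0#t)}" using I(1) unfolding J_def by auto
    show "nths (0#t) J = r" using I(2) e by (simp add: nths_Cons J_def)
    fix i assume "i < length (0#t)" "i \<notin> J"
    then show "(0#t) ! i = 0" using I(3) unfolding J_def
      by (cases i) auto
  qed
qed

lemma gap_ext_Nil: "gap_ext [] []"
  unfolding gap_ext_def by auto

lemma gap_ext_app: "gap_ext r (r @ replicate m 0)"
  unfolding gap_ext_def
proof (intro exI conjI allI impI)
  show "{..<length r} \<subseteq> {0..<length (r @ replicate m 0)}" by auto
  show "nths (r @ replicate m 0) {..<length r} = r" by simp
  fix i assume "i < length (r @ replicate m 0)" "i \<notin> {..<length r}"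
  then show "(r @ replicate m 0) ! i = 0" by (simp add: nth_append)
qed

lemma l1_Cons: "l1_dist (a#u) (b#v) = \<bar>a-b\<bar> + l1_dist u v"
  unfolding l1_dist_def length_Cons sum.lessThan_Suc_shift by simp

abbreviation nz :: "real list \<Rightarrow> real list" where "nz y \<equiv> filter (\<lambda>v. v \<noteq> 0) y"

lemma align_aux: "\<forall>y y'. length y + length y' = n \<longrightarrow> length (nz y) = length (nz y') \<longrightarrow>
  (\<exists>r' s'. length r' = length s' \<and> length y \<le> length r' \<and> length y' \<le> length r' \<and>
     gap_ext y r' \<and> gap_ext y' s' \<and> l1_dist r' s' = l1_dist (nz y) (nz y'))"
proof (induction n rule: less_induct)
  case (less n)
  show ?case
  proof (intro allI impI)
    fix y y' :: "real list"
    assume n: "length y + length y' = n" and L: "length (nz y) = length (nz y')"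
    show "\<exists>r' s'. length r' = length s' \<and> length y \<le> length r' \<and> length y' \<le> length r' \<and>
     gap_ext y r' \<and> gap_ext y' s' \<and> l1_dist r' s' = l1_dist (nz y) (nz y')"
    proof (cases "\<exists>y1. y = 0 # y1")
      case True
      then obtain y1 where y: "y = 0 # y1" by blast
      from less[rule_format, of "length y1 + length y'" y1 y'] n L y
      obtain r1 s1 where "length r1 = length s1 \<and> length y1 \<le> length r1 \<and> length y' \<le> length r1 \<and>
        gap_ext y1 r1 \<and> gap_ext y' s1 \<and> l1_dist r1 s1 = l1_dist (nz y1) (nz y')" by auto
      then show ?thesis using y
        by (intro exI[of _ "0#r1"] exI[of _ "0#s1"]) (auto simp: l1_Cons gap_ext_Cons gap_ext_zero)
    next
      case F1: False
      show ?thesis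
      proof (cases "\<exists>y1. y' = 0 # y1")
        case True
        then obtain y1 where y: "y' = 0 # y1" by blast
        from less[rule_format, of "length y + length y1" y y1] n L y
        obtain r1 s1 where "length r1 = length s1 \<and> length y \<le> length r1 \<and> length y1 \<le> length r1 \<and>
          gap_ext y r1 \<and> gap_ext y1 s1 \<and> l1_dist r1 s1 = l1_dist (nz y) (nz y1)" by auto
        then show ?thesis using y
          by (intro exI[of _ "0#r1"] exI[of _ "0#s1"]) (auto simp: l1_Cons gap_ext_Cons gap_ext_zero)
      next
        case F2: False
        show ?thesis
        proof (cases y)
          case Nil
          then have "y' = []" using F2 L by (cases y') auto
          then show ?thesis using Nil
            by (intro exI[of _ "[]"] exI[of _ "[]"]) (auto simp: gap_ext_Nil l1_dist_def)
        next
          case (Cons a y1)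
          then have a: "a \<noteq> 0" using F1 by auto
          then obtain b y1' where y': "y' = b # y1'" "b \<noteq> 0" using F2 L Cons by (cases y') auto
          from less[rule_format, of "length y1 + length y1'" y1 y1'] n L Cons y' a
          obtain r1 s1 where "length r1 = length s1 \<and> length y1 \<le> length r1 \<and> length y1' \<le> length r1 \<and>
            gap_ext y1 r1 \<and> gap_ext y1' s1 \<and> l1_dist r1 s1 = l1_dist (nz y1) (nz y1')" by auto
          then show ?thesis using Cons y' a
            by (intro exI[of _ "a#r1"] exI[of _ "b#s1"]) (auto simp: l1_Cons gap_ext_Cons)
        qed
      qed
    qed
  qed
qed

lemma l1_nonneg: "0 \<le> l1_dist u v" unfolding l1_dist_def by (auto intro: sum_nonneg)

lemma dERP_le_wit: assumes "p \<ge> max (length r) (length s)" "r' \<in> gap_exts r p" "s' \<in> gap_exts s p"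
  shows "d_ERP r s \<le> l1_dist r' s'"
  unfolding d_ERP_def
  by (rule cInf_lower) (use assms in \<open>auto intro!: bdd_belowI[of _ 0] simp: l1_nonneg\<close>)

lemma dERP_le_nz: assumes "length (nz y) = length (nz y')"
  shows "d_ERP y y' \<le> l1_dist (nz y) (nz y')"
proof -
  obtain r' s' where "length r' = length s'" "length y \<le> length r'" "length y' \<le> length r'"
     "gap_ext y r'" "gap_ext y' s'" "l1_dist r' s' = l1_dist (nz y) (nz y')"
    using align_aux assms by blast
  then show ?thesis using dERP_le_wit[where p="length r'" and r=y and s=y' and r'=r' and s'=s']
    by (auto simp: gap_exts_def)
qed

lemma dERP_set_ne: "{l1_dist r' s' | p r' s'.
      p \<ge> max (length r) (length s) \<and> r' \<in> gap_exts r p \<and> s' \<in> gap_exts s p} \<noteq> {}"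
proof -
  let ?p = "max (length r) (length s)"
  have "r @ replicate (?p - length r) 0 \<in> gap_exts r ?p" "s @ replicate (?p - length s) 0 \<in> gap_exts s ?p"
    by (auto simp: gap_exts_def gap_ext_app)
  then show ?thesis by blast
qed

lemma dERP_witness: assumes "d_ERP x y < e"
  shows "\<exists>p r' s'. p \<ge> max (length x) (length y) \<and> r' \<in> gap_exts x p \<and> s' \<in> gap_exts y p \<and> l1_dist r' s' < e"
proof -
  from cInf_lessD[OF dERP_set_ne assms(1)[unfolded d_ERP_def]]
  show ?thesis by auto
qed

lemma anchor: assumes "d_ERP x y < e" "v \<in> set y"
  shows "\<exists>c \<in> insert 0 (set x). \<bar>v - c\<bar> < e"
proof -
  obtain p r' s' where w: "r' \<in> gap_exts x p" "s' \<in> gap_exts y p" "l1_dist r' s' < e"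
    using dERP_witness[OF assms(1)] by auto
  have gx: "gap_ext x r'" "length r' = p" using w(1) by (auto simp add: gap_exts_def)
  have gy: "gap_ext y s'" "length s' = p" using w(2) by (auto simp add: gap_exts_def)
  from gx(1) obtain I where I: "nths r' I = x" "\<forall>i<length r'. i \<notin> I \<longrightarrow> r' ! i = 0"
    unfolding gap_ext_def by blast
  from gy(1) obtain J where J: "nths s' J = y"
    unfolding gap_ext_def by blast
  have "set y \<subseteq> set s'" using set_nths_subset[of s' J] J by simp
  then have "v \<in> set s'" using assms(2) by (rule subsetD)
  then obtain i where i: "i < length s'" "s' ! i = v" by (auto simp: in_set_conv_nth)
  have c: "r' ! i \<in> insert 0 (set x)"
  proof (cases "i \<in> I")
    case True
    have "r' ! i \<in> set (nths r' I)" unfolding set_nths using True i gx gy by auto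
    then show ?thesis using I(1) by simp
  next
    case False then show ?thesis using I(2) i gx gy by auto
  qed
  have "\<bar>r' ! i - s' ! i\<bar> \<le> l1_dist r' s'" unfolding l1_dist_def
    by (rule member_le_sum) (use i gx gy in auto)
  then show ?thesis using c i w(3) by (intro bexI[of _ "r' ! i"]) auto
qed


lemma nz_len: "sparse k s \<Longrightarrow> length (nz s) \<le> k"
  unfolding sparse_def by (simp add: length_filter_conv_card)

lemma card_anchors: assumes "sparse k x" shows "card (insert 0 (set x)) \<le> k + 1"
proof -
  have "insert 0 (set x) \<subseteq> insert 0 (set (nz x))" by auto
  then have "card (insert 0 (set x)) \<le> card (insert 0 (set (nz x)))"
    by (intro card_mono) auto
  also have "\<dots> \<le> Suc (card (set (nz x)))" by (rule card_insert_le_m1) auto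
  also have "\<dots> \<le> Suc (length (nz x))" using card_length by (intro Suc_le_mono[THEN iffD2])
  finally show ?thesis using nz_len[OF assms] by simp
qed

lemma floor_close: "\<lfloor>u::real\<rfloor> = \<lfloor>w\<rfloor> \<Longrightarrow> \<bar>u - w\<bar> < 1"
proof -
  assume e: "\<lfloor>u::real\<rfloor> = \<lfloor>w\<rfloor>"
  have "of_int \<lfloor>u\<rfloor> \<le> u" "u < of_int \<lfloor>u\<rfloor> + 1" "of_int \<lfloor>w\<rfloor> \<le> w" "w < of_int \<lfloor>w\<rfloor> + 1"
    by linarith+
  moreover have "(of_int \<lfloor>u\<rfloor> :: real) = of_int \<lfloor>w\<rfloor>" using e by simp
  ultimately show ?thesis unfolding abs_less_iff by linarith
qed

lemma key_close:
  fixes f :: "real \<Rightarrow> real" and \<delta> :: real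
  assumes d: "\<delta> > 0"
    and eq: "map (\<lambda>v. (f v, \<lfloor>(v - f v)/\<delta>\<rfloor>)) a = map (\<lambda>v. (f v, \<lfloor>(v - f v)/\<delta>\<rfloor>)) b"
  shows "length a = length b \<and> (\<forall>j<length a. \<bar>a!j - b!j\<bar> < \<delta>)"
proof
  show L: "length a = length b" using map_eq_imp_length_eq[OF eq] .
  show "\<forall>j<length a. \<bar>a!j - b!j\<bar> < \<delta>"
  proof (intro allI impI)
    fix j assume j: "j < length a"
    have "map (\<lambda>v. (f v, \<lfloor>(v - f v)/\<delta>\<rfloor>)) a ! j = map (\<lambda>v. (f v, \<lfloor>(v - f v)/\<delta>\<rfloor>)) b ! j"
      using eq by simp
    then have e1: "f (a!j) = f (b!j)" and e2: "\<lfloor>(a!j - f (a!j))/\<delta>\<rfloor> = \<lfloor>(b!j - f (b!j))/\<delta>\<rfloor>"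
      using j L by auto
    have "\<bar>(a!j - f (a!j))/\<delta> - (b!j - f (b!j))/\<delta>\<bar> < 1" using floor_close[OF e2] .
    also have "(a!j - f (a!j))/\<delta> - (b!j - f (b!j))/\<delta> = (a!j - b!j)/\<delta>"
      using e1 by (simp add: diff_divide_distrib)
    finally have "\<bar>a!j - b!j\<bar> / \<delta> < 1" using d by simp
    then show "\<bar>a!j - b!j\<bar> < \<delta>" using d by (simp add: divide_less_eq)
  qed
qed

lemma l1_le: assumes "\<forall>j<length a. \<bar>a!j - b!j\<bar> < \<delta>"
  shows "l1_dist a b \<le> real (length a) * \<delta>"
proof -
  have "l1_dist a b \<le> real (card {..<length a}) * \<delta>" unfolding l1_dist_def
    by (rule sum_bounded_above) (use assms in auto)
  then show ?thesis by simp
qed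

lemma card_lists_bound: assumes "finite X" "card X \<ge> 1"
  shows "card {xs. set xs \<subseteq> X \<and> length xs \<le> n} \<le> (n+1) * card X ^ n"
proof -
  have "card {xs. set xs \<subseteq> X \<and> length xs \<le> n} = (\<Sum>i\<le>n. card X^i)"
    by (rule card_lists_length_le[OF assms(1)])
  also have "\<dots> \<le> (\<Sum>i\<le>n. card X^n)"
    by (rule sum_mono) (use assms(2) in \<open>auto intro: power_increasing\<close>)
  also have "\<dots> = (n+1) * card X ^ n" by simp
  finally show ?thesis .
qed


lemma cover:
  fixes k :: nat and S :: "real list set"
  assumes k: "k \<ge> 1" and sp: "\<forall>s\<in>S. sparse k s" and x: "x \<in> S" and rho: "\<rho> > 0"
  shows "\<exists>T. T \<subseteq> S \<and> finite T \<and> card T \<le> (k+1)*((k+1)*(16*k+1))^k \<and>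
      dball d_ERP S x \<rho> \<subseteq> (\<Union>t\<in>T. dball d_ERP S t (\<rho>/2))"
proof -
  define A where "A = insert 0 (set x)"
  define \<delta> where "\<delta> = \<rho> / (4 * real k)"
  define anc where "anc v = (SOME c. c \<in> A \<and> \<bar>v - c\<bar> < 2*\<rho>)" for v
  define key where "key y = map (\<lambda>v. (anc v, \<lfloor>(v - anc v)/\<delta>\<rfloor>)) (nz y)" for y
  define B where "B = dball d_ERP S x \<rho>"
  define X where "X = A \<times> {-(8*int k)..8*int k}"
  define K where "K = {ks. set ks \<subseteq> X \<and> length ks \<le> k}"
  have kpos: "real k > 0" using k by simp
  have dpos: "\<delta> > 0" using rho kpos unfolding \<delta>_def by simp
  have d8: "8 * real k * \<delta> = 2 * \<rho>" using kpos unfolding \<delta>_def by (simp add: field_simps)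
  have dk: "real k * \<delta> = \<rho> / 4" using kpos unfolding \<delta>_def by (simp add: field_simps)
  have finA: "finite A" unfolding A_def by simp
  have cardA: "card A \<le> k + 1" unfolding A_def using card_anchors sp x by blast
  have BS: "B \<subseteq> S" unfolding B_def dball_def by auto
  have anc: "anc v \<in> A \<and> \<bar>v - anc v\<bar> < 2*\<rho>" if y: "y \<in> B" "v \<in> set y" for y v
  proof -
    have "d_ERP x y \<le> \<rho>" using y(1) unfolding B_def dball_def by auto
    then have "d_ERP x y < 2*\<rho>" using rho by simp
    from anchor[OF this y(2)] have "\<exists>c. c \<in> A \<and> \<bar>v - c\<bar> < 2*\<rho>" unfolding A_def by blast
    then show ?thesis unfolding anc_def by (rule someI_ex)
  qed
  have keyK: "key y \<in> K" if y: "y \<in> B" for y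
  proof -
    have sy: "sparse k y" using y BS sp by blast
    have "set (key y) \<subseteq> X"
    proof
      fix q assume "q \<in> set (key y)"
      then obtain v where v: "v \<in> set (nz y)" "q = (anc v, \<lfloor>(v - anc v)/\<delta>\<rfloor>)"
        unfolding key_def by auto
      have vy: "v \<in> set y" using v(1) by simp
      have a: "anc v \<in> A" and b: "\<bar>v - anc v\<bar> < 8 * real k * \<delta>" using anc[OF y vy] d8 by (auto simp: mult_ac)
      have "\<bar>(v - anc v)/\<delta>\<bar> < 8 * real k" using b dpos by (simp add: divide_less_eq)
      then have "(v - anc v)/\<delta> < 8 * real k \<and> - ((v - anc v)/\<delta>) < 8 * real k"
        by (simp only: abs_less_iff)
      then have lo: "- (8 * real k) < (v - anc v)/\<delta>" and hi: "(v - anc v)/\<delta> < 8 * real k"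
        by linarith+
      have "- (8 * int k) \<le> \<lfloor>(v - anc v)/\<delta>\<rfloor>" using lo by (simp add: le_floor_iff)
      moreover have "\<lfloor>(v - anc v)/\<delta>\<rfloor> \<le> 8 * int k"
      proof -
        have "real_of_int \<lfloor>(v - anc v)/\<delta>\<rfloor> \<le> (v - anc v)/\<delta>" by (rule of_int_floor_le)
        moreover have "real_of_int (8 * int k) = 8 * real k" by simp
        ultimately have "real_of_int \<lfloor>(v - anc v)/\<delta>\<rfloor> < real_of_int (8 * int k)" using hi by linarith
        then show ?thesis by linarith
      qed
      ultimately show "q \<in> X" using a v(2) unfolding X_def by auto
    qed
    moreover have "length (key y) \<le> k" unfolding key_def using nz_len[OF sy] by simp
    ultimately show ?thesis unfolding K_def by blast
  qed
  define rep where "rep \<kappa> = (SOME y. y \<in> B \<and> key y = \<kappa>)" for \<kappa>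
  define T where "T = rep ` key ` B"
  have rep: "rep (key y) \<in> B \<and> key (rep (key y)) = key y" if "y \<in> B" for y
  proof -
    have "\<exists>y'. y' \<in> B \<and> key y' = key y" using that by blast
    then show ?thesis unfolding rep_def by (rule someI_ex)
  qed
  have TB: "T \<subseteq> B" unfolding T_def using rep by auto
  have n16: "nat (16 * int k + 1) = 16*k+1"
  proof -
    have "16 * int k + 1 = int (16*k+1)" by simp
    then show ?thesis by (simp only: nat_int)
  qed
  have cI: "card {-(8*int k)..8*int k} = 16*k+1" using n16 by simp
  have finX: "finite X" unfolding X_def using finA by simp
  have finK: "finite K" unfolding K_def by (rule finite_lists_length_le[OF finX])
  have kB: "key ` B \<subseteq> K" using keyK by auto
  have finkB: "finite (key ` B)" using finite_subset[OF kB finK] .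
  have "card T \<le> card (key ` B)" unfolding T_def by (rule card_image_le[OF finkB])
  also have "\<dots> \<le> card K" by (rule card_mono[OF finK kB])
  also have "\<dots> \<le> (k+1) * card X ^ k"
  proof -
    have cX: "card X = card A * (16*k+1)" unfolding X_def card_cartesian_product cI by simp
    have "card A \<ge> 1" unfolding A_def by (simp add: card_gt_0_iff Suc_le_eq)
    then have "card X \<ge> 1" using cX by simp
    then show ?thesis unfolding K_def by (rule card_lists_bound[OF finX])
  qed
  also have "\<dots> \<le> (k+1)*((k+1)*(16*k+1))^k"
  proof -
    have "card X \<le> (k+1)*(16*k+1)" unfolding X_def card_cartesian_product cI using cardA by (intro mult_le_mono1)
    then show ?thesis by (intro mult_le_mono2 power_mono) auto
  qed
  finally have cardT: "card T \<le> (k+1)*((k+1)*(16*k+1))^k" .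
  have finT: "finite T" unfolding T_def using finkB by simp
  have covers: "B \<subseteq> (\<Union>t\<in>T. dball d_ERP S t (\<rho>/2))"
  proof
    fix y assume y: "y \<in> B"
    define t where "t = rep (key y)"
    have t: "t \<in> T" unfolding t_def T_def using y by blast
    have tk: "key t = key y" unfolding t_def using rep[OF y] by simp
    have cl: "length (nz t) = length (nz y) \<and> (\<forall>j<length (nz t). \<bar>nz t!j - nz y!j\<bar> < \<delta>)"
      using key_close[OF dpos, of anc "nz t" "nz y"] tk unfolding key_def by simp
    have st: "sparse k t" using t TB BS sp by blast
    have "d_ERP t y \<le> l1_dist (nz t) (nz y)" using cl by (intro dERP_le_nz) simp
    also have "\<dots> \<le> real (length (nz t)) * \<delta>" using cl by (intro l1_le) simp
    also have "\<dots> \<le> real k * \<delta>" using nz_len[OF st] dpos by (intro mult_right_mono) auto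
    also have "\<dots> \<le> \<rho>/2" using dk rho by simp
    finally have "d_ERP t y \<le> \<rho>/2" .
    then have "y \<in> dball d_ERP S t (\<rho>/2)" using y BS unfolding dball_def by auto
    then show "y \<in> (\<Union>t\<in>T. dball d_ERP S t (\<rho>/2))" using t by blast
  qed
  show ?thesis using TB BS finT cardT covers unfolding B_def[symmetric] by blast
qed


lemma nat_bound: assumes k: "(k::nat) \<ge> 2"
  shows "(k+1)*((k+1)*(16*k+1))^k \<le> k^(9*k)"
proof -
  have "2 * k \<le> k * k" using mult_le_mono1[OF k, of k] by simp
  then have "k + 1 \<le> k * k" using k by linarith
  then have h1: "k + 1 \<le> k^2" by (simp add: power2_eq_square)
  have "(2::nat)^5 \<le> k^5" by (rule power_mono[OF k]) simp
  then have "17 \<le> k^5" by simp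
  then have "17 * k \<le> k^5 * k" by simp
  then have h2: "16*k+1 \<le> k^6" using k by (simp add: power_Suc2[symmetric] del: power_Suc)
  have "(k+1)*(16*k+1) \<le> k^2 * k^6" by (rule mult_le_mono[OF h1 h2])
  then have h3: "(k+1)*(16*k+1) \<le> k^8" by (simp add: power_add[symmetric])
  have "(k+1)*((k+1)*(16*k+1))^k \<le> k^2 * (k^8)^k"
    by (rule mult_le_mono[OF h1 power_mono[OF h3]]) simp
  also have "\<dots> = k^(8*k+2)" by (simp add: power_mult[symmetric] power_add[symmetric] add.commute)
  also have "\<dots> \<le> k^(9*k)" using k by (intro power_increasing) auto
  finally show ?thesis .
qed

lemma ln2_half: "1/2 \<le> ln (2::real)"
proof -
  have e: "exp (1/2::real) * exp (1/2) = exp 1" by (simp add: exp_add[symmetric])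
  have "exp (1/2::real) \<le> 2"
  proof (rule ccontr)
    assume "\<not> exp (1/2::real) \<le> 2"
    then have "2 < exp (1/2::real)" by simp
    then have "2 * 2 < exp (1/2::real) * exp (1/2)" by (intro mult_strict_mono) auto
    then show False using e exp_le by simp
  qed
  then show ?thesis using ln_ge_iff[of 2 "1/2"] by simp
qed

lemma numeric: assumes k: "(k::nat) \<ge> 2"
  shows "real ((k+1)*((k+1)*(16*k+1))^k) \<le> 2 powr (20 * real k * ln (real k))"
proof -
  have kp: "real k > 0" using k by simp
  have "real ((k+1)*((k+1)*(16*k+1))^k) \<le> real (k^(9*k))" using nat_bound[OF k] by (simp only: of_nat_le_iff)
  also have "\<dots> = real k powr (real (9*k))" using powr_realpow[OF kp, of "9*k"] by simp
  also have "\<dots> = exp (real (9*k) * ln (real k))" using kp by (simp add: powr_def)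
  also have "\<dots> \<le> exp ((20 * real k * ln (real k)) * ln 2)"
  proof -
    have kl: "0 \<le> real k * ln (real k)" using k by simp
    have "real (9*k) * ln (real k) = 9 * (real k * ln (real k))" by simp
    also have "\<dots> \<le> (20 * ln 2) * (real k * ln (real k))"
      using ln2_half kl by (intro mult_right_mono) auto
    also have "\<dots> = (20 * real k * ln (real k)) * ln 2" by simp
    finally show ?thesis by simp
  qed
  also have "\<dots> = 2 powr (20 * real k * ln (real k))" by (simp add: powr_def)
  finally show ?thesis .
qed

theorem mainTheorem11:
  shows "\<exists>C::real. \<forall>k::nat. k \<ge> 2 \<longrightarrow> (\<forall>S::real list set.
     (\<forall>s\<in>S. sparse k s) \<longrightarrow> doubling_dim_le d_ERP S (C * real k * ln (real k)))"
proof (intro exI[of _ 20] allI impI)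
  fix k :: nat and S :: "real list set"
  assume k: "k \<ge> 2" and sp: "\<forall>s\<in>S. sparse k s"
  show "doubling_dim_le d_ERP S (20 * real k * ln (real k))"
    unfolding doubling_dim_le_def doubling_const_le_def
  proof (intro ballI allI impI)
    fix x \<rho> assume x: "x \<in> S" and rho: "(\<rho>::real) > 0"
    obtain T where T: "T \<subseteq> S" "finite T" "card T \<le> (k+1)*((k+1)*(16*k+1))^k"
      "dball d_ERP S x \<rho> \<subseteq> (\<Union>t\<in>T. dball d_ERP S t (\<rho>/2))"
      using cover[of k S x \<rho>] k sp x rho by auto
    have "real (card T) \<le> 2 powr (20 * real k * ln (real k))"
      using T(3) numeric[OF k] by (meson of_nat_le_iff order_trans)
    then show "\<exists>T. T \<subseteq> S \<and> finite T \<and> real (card T) \<le> 2 powr (20 * real k * ln (real k)) \<and>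
        dball d_ERP S x \<rho> \<subseteq> (\<Union>t\<in>T. dball d_ERP S t (\<rho>/2))" using T by blast
  qed
qed

end
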